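(* Let $H,K,A_1,\ldots,A_n$ be groups such that $H\times K$ is a finite-index subgroup of $A_1\times\cdots\times A_n$. If $A_1,\ldots,A_n$ have almost stable centralisers and if $H$ is a non-cyclic group admitting an IMC generating set, then there exists an index $1\le i\le n$ such that $$H\leq \mathrm{VZ}(A_1)\times\cdots\times\mathrm{VZ}(A_{i-1})\times A_i\times\mathrm{VZ}(A_{i+1})\times\cdots\times\mathrm{VZ}(A_n).$$
   Context: A group $G$ has almost stable centralisers if for all $g\in G$ and $k\ge1$, the centraliser $C(g)$ has finite index in $C(g^k)$. A subset $S\subset G$ is an IMC generating set if it generates $G$ and satisfies: (Independence) for all distinct $s_1,s_2\in S$ and all integers $p,q\ge1$, $[s_1^p,s_2^q]\ne1$; (Maximal Centralisers) for all $s\in S$ and $g\in G$, if $C(s)\subsetneq C(g)$ then $g=1$. The virtual centre $\mathrm{VZ}(G)$ is the set of elements of $G$ centralising some finite-index subgroup of $G$. *)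

theory Defs
  imports "HOL-Algebra.Algebra"
begin

definition centraliser :: "('a, 'b) monoid_scheme \<Rightarrow> 'a \<Rightarrow> 'a set" where
  "centraliser G g = {h \<in> carrier G. h \<otimes>\<^bsub>G\<^esub> g = g \<otimes>\<^bsub>G\<^esub> h}"

definition finite_index :: "'a set \<Rightarrow> ('a, 'b) monoid_scheme \<Rightarrow> bool" where
  "finite_index S G \<longleftrightarrow> subgroup S G \<and> finite (rcosets\<^bsub>G\<^esub> S)"

definition almost_stable_centralisers :: "('a, 'b) monoid_scheme \<Rightarrow> bool" where
  "almost_stable_centralisers G \<longleftrightarrow>
     (\<forall>g \<in> carrier G. \<forall>k::nat. k \<ge> 1 \<longrightarrow>
        finite_index (centraliser G g) (G\<lparr>carrier := centraliser G (g [^]\<^bsub>G\<^esub> k)\<rparr>))"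

definition IMC_generating_set :: "('a, 'b) monoid_scheme \<Rightarrow> 'a set \<Rightarrow> bool" where
  "IMC_generating_set G S \<longleftrightarrow>
     S \<subseteq> carrier G \<and> generate G S = carrier G \<and>
     (\<forall>s1 \<in> S. \<forall>s2 \<in> S. s1 \<noteq> s2 \<longrightarrow> (\<forall>(p::nat) (q::nat). p \<ge> 1 \<longrightarrow> q \<ge> 1 \<longrightarrow>
        s1 [^]\<^bsub>G\<^esub> p \<otimes>\<^bsub>G\<^esub> s2 [^]\<^bsub>G\<^esub> q \<noteq> s2 [^]\<^bsub>G\<^esub> q \<otimes>\<^bsub>G\<^esub> s1 [^]\<^bsub>G\<^esub> p)) \<and>
     (\<forall>s \<in> S. \<forall>g \<in> carrier G. centraliser G s \<subset> centraliser G g \<longrightarrow> g = \<one>\<^bsub>G\<^esub>)"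

definition virtual_centre :: "('a, 'b) monoid_scheme \<Rightarrow> 'a set" where
  "virtual_centre G = {g \<in> carrier G. \<exists>F. finite_index F G \<and>
      (\<forall>f \<in> F. g \<otimes>\<^bsub>G\<^esub> f = f \<otimes>\<^bsub>G\<^esub> g)}"

end

theory Submission
  imports Defs
begin



definition ftrans :: "('a, 'b) monoid_scheme \<Rightarrow> 'a set \<Rightarrow> bool" where
  "ftrans G F \<longleftrightarrow> (\<exists>R. finite R \<and> R \<subseteq> carrier G \<and> (\<forall>x\<in>carrier G. \<exists>r\<in>R. \<exists>f\<in>F. x = f \<otimes>\<^bsub>G\<^esub> r))"

lemma (in group) fi_ftrans:
  assumes "subgroup F G"
  shows "finite_index F G \<longleftrightarrow> ftrans G F"
proof
  assume "finite_index F G"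
  hence fin: "finite (rcosets F)" by (simp add: finite_index_def)
  define R where "R = (\<lambda>Q. (SOME y. y \<in> Q)) ` (rcosets F)"
  have "finite R" using fin by (simp add: R_def)
  moreover have "R \<subseteq> carrier G"
  proof
    fix y assume "y \<in> R"
    then obtain Q where Q: "Q \<in> rcosets F" "y = (SOME y. y \<in> Q)" by (auto simp: R_def)
    then obtain a where a: "a \<in> carrier G" "Q = F #> a" by (auto simp: RCOSETS_def)
    have "a \<in> Q" using rcos_self[OF a(1) assms] a(2) by simp
    hence "y \<in> Q" using Q(2) someI[of "\<lambda>y. y \<in> Q"] by simp
    thus "y \<in> carrier G" using a subgroup.elemrcos_carrier[OF assms is_group] by simp
  qed
  moreover have "\<forall>x\<in>carrier G. \<exists>r\<in>R. \<exists>f\<in>F. x = f \<otimes> r"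
  proof
    fix x assume x: "x \<in> carrier G"
    define y where "y = (SOME y. y \<in> F #> x)"
    have Q: "F #> x \<in> rcosets F" using rcosetsI[OF subgroup.subset[OF assms] x] .
    have "x \<in> F #> x" using rcos_self[OF x assms] .
    hence yin: "y \<in> F #> x" unfolding y_def using someI[of "\<lambda>y. y \<in> F #> x"] by simp
    have yR: "y \<in> R" unfolding R_def y_def using Q by (rule imageI)
    obtain f where f: "f \<in> F" "y = f \<otimes> x" using yin unfolding r_coset_def by blast
    have fc: "f \<in> carrier G" using f(1) subgroup.mem_carrier[OF assms] by simp
    have "x = inv f \<otimes> y" using f fc x by (simp add: m_assoc[symmetric])
    moreover have "inv f \<in> F" using f(1) subgroup.m_inv_closed[OF assms] by simp
    ultimately show "\<exists>r\<in>R. \<exists>f\<in>F. x = f \<otimes> r" using yR by blast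
  qed
  ultimately show "ftrans G F" unfolding ftrans_def by blast
next
  assume "ftrans G F"
  then obtain R where R: "finite R" "R \<subseteq> carrier G" "\<forall>x\<in>carrier G. \<exists>r\<in>R. \<exists>f\<in>F. x = f \<otimes> r"
    unfolding ftrans_def by blast
  have "rcosets F \<subseteq> (\<lambda>r. F #> r) ` R"
  proof
    fix Q assume "Q \<in> rcosets F"
    then obtain x where x: "x \<in> carrier G" "Q = F #> x" by (auto simp: RCOSETS_def)
    then obtain r f where rf: "r \<in> R" "f \<in> F" "x = f \<otimes> r" using R by blast
    have rc: "r \<in> carrier G" using rf(1) R(2) by blast
    have fc: "f \<in> carrier G" using rf(2) subgroup.mem_carrier[OF assms] by simp
    have "F #> x = (F #> f) #> r" using coset_mult_assoc[OF subgroup.subset[OF assms] fc rc] rf(3) by simp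
    also have "\<dots> = F #> r" using subgroup.rcos_const[OF assms is_group rf(2)] by simp
    finally show "Q \<in> (\<lambda>r. F #> r) ` R" using x rf by blast
  qed
  hence "finite (rcosets F)" using R(1) finite_surj by blast
  thus "finite_index F G" using assms by (simp add: finite_index_def)
qed

lemma (in group) pigeon:
  assumes "finite_index F G" "x \<in> carrier G"
  shows "\<exists>m::nat. m \<ge> 1 \<and> x [^] m \<in> F"
proof -
  have sg: "subgroup F G" and fin: "finite (rcosets F)" using assms(1) by (auto simp: finite_index_def)
  have "range (\<lambda>k::nat. F #> x [^] k) \<subseteq> rcosets F"
    using rcosetsI[OF subgroup.subset[OF sg]] assms(2) by auto
  hence "finite (range (\<lambda>k::nat. F #> x [^] k))" using fin finite_subset by blast
  hence ninj: "\<not> inj (\<lambda>k::nat. F #> x [^] k)"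
    using finite_imageD[of "\<lambda>k::nat. F #> x [^] k" UNIV] infinite_UNIV_nat by auto
  have "\<exists>a b::nat. a < b \<and> F #> x [^] a = F #> x [^] b"
  proof (rule ccontr)
    assume nab: "\<not> (\<exists>a b::nat. a < b \<and> F #> x [^] a = F #> x [^] b)"
    have "inj (\<lambda>k::nat. F #> x [^] k)"
    proof (rule injI)
      fix a b :: nat assume e: "F #> x [^] a = F #> x [^] b"
      show "a = b"
      proof (rule linorder_cases[of a b])
        assume "a < b" thus ?thesis using nab e by blast
      next
        assume "b < a" thus ?thesis using nab e[symmetric] by blast
      qed
    qed
    thus False using ninj by contradiction
  qed
  then obtain a b :: nat where ab: "a < b" "F #> x [^] a = F #> x [^] b" by blast
  have xb: "x [^] b \<in> F #> x [^] a" using ab(2) rcos_self[OF _ sg, of "x [^] b"] assms(2) by simp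
  then obtain f where f: "f \<in> F" "x [^] b = f \<otimes> x [^] a" unfolding r_coset_def by blast
  have fc: "f \<in> carrier G" using f(1) subgroup.mem_carrier[OF sg] by simp
  have "x [^] (b - a) \<otimes> x [^] a = x [^] b" using nat_pow_mult[OF assms(2), of "b-a" a] ab(1) by simp
  hence "x [^] (b - a) \<otimes> x [^] a = f \<otimes> x [^] a" using f(2) by simp
  hence "x [^] (b - a) = f" using fc assms(2) by (simp add: r_cancel)
  thus ?thesis using f(1) ab(1) by (intro exI[of _ "b-a"]) auto
qed

lemma (in group) ftrans_mono:
  assumes "ftrans G F" "F \<subseteq> C" shows "ftrans G C"
proof -
  obtain R where R: "finite R" "R \<subseteq> carrier G" "\<forall>x\<in>carrier G. \<exists>r\<in>R. \<exists>f\<in>F. x = f \<otimes> r"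
    using assms(1) unfolding ftrans_def by blast
  have "\<forall>x\<in>carrier G. \<exists>r\<in>R. \<exists>f\<in>C. x = f \<otimes> r" using R(3) assms(2) by blast
  thus ?thesis using R(1,2) unfolding ftrans_def by blast
qed

lemma (in group) ftrans_trans:
  assumes "ftrans G C" "ftrans (G\<lparr>carrier := C\<rparr>) F" "C \<subseteq> carrier G" and FC: "F \<subseteq> C"
  shows "ftrans G F"
proof -
  obtain R1 where R1: "finite R1" "R1 \<subseteq> carrier G" "\<forall>x\<in>carrier G. \<exists>r\<in>R1. \<exists>c\<in>C. x = c \<otimes> r"
    using assms(1) unfolding ftrans_def by blast
  obtain R2 where R2: "finite R2" "R2 \<subseteq> C" "\<forall>x\<in>C. \<exists>r\<in>R2. \<exists>f\<in>F. x = f \<otimes> r"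
    using assms(2) unfolding ftrans_def by auto
  define R where "R = (\<lambda>(a,b). a \<otimes> b) ` (R2 \<times> R1)"
  have "finite R" using R1(1) R2(1) by (simp add: R_def)
  moreover have "R \<subseteq> carrier G" using R1(2) R2(2) assms(3) by (auto simp: R_def)
  moreover have "\<forall>x\<in>carrier G. \<exists>r\<in>R. \<exists>f\<in>F. x = f \<otimes> r"
  proof
    fix x assume "x \<in> carrier G"
    then obtain r1 c where 1: "r1 \<in> R1" "c \<in> C" "x = c \<otimes> r1" using R1 by blast
    then obtain r2 f where 2: "r2 \<in> R2" "f \<in> F" "c = f \<otimes> r2" using R2 by blast
    have c1: "r1 \<in> carrier G" "r2 \<in> carrier G" "f \<in> carrier G" using 1 2 R1(2) R2(2) assms(3) FC by auto
    have "x = f \<otimes> (r2 \<otimes> r1)" using 1(3) 2(3) c1 by (simp add: m_assoc)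
    moreover have "r2 \<otimes> r1 \<in> R" using 1 2 by (auto simp: R_def)
    ultimately show "\<exists>r\<in>R. \<exists>f\<in>F. x = f \<otimes> r" using 2 by blast
  qed
  ultimately show ?thesis unfolding ftrans_def by blast
qed




lemma (in group) comm_mult:
  assumes "a \<in> carrier G" "b \<in> carrier G" "c \<in> carrier G" "a \<otimes> c = c \<otimes> a" "b \<otimes> c = c \<otimes> b"
  shows "(a \<otimes> b) \<otimes> c = c \<otimes> (a \<otimes> b)"
proof -
  have "(a \<otimes> b) \<otimes> c = a \<otimes> (b \<otimes> c)" using assms(1-3) by (simp only: m_assoc)
  also have "\<dots> = a \<otimes> (c \<otimes> b)" by (simp only: assms(5))
  also have "\<dots> = (a \<otimes> c) \<otimes> b" using assms(1-3) by (simp only: m_assoc)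
  also have "\<dots> = (c \<otimes> a) \<otimes> b" by (simp only: assms(4))
  also have "\<dots> = c \<otimes> (a \<otimes> b)" using assms(1-3) by (simp only: m_assoc)
  finally show ?thesis .
qed

lemma (in group) comm_inv:
  assumes "a \<in> carrier G" "c \<in> carrier G" "a \<otimes> c = c \<otimes> a"
  shows "inv a \<otimes> c = c \<otimes> inv a"
proof -
  have ia: "inv a \<in> carrier G" using assms by simp
  have "inv a \<otimes> c = (inv a \<otimes> c) \<otimes> (a \<otimes> inv a)" using assms ia by simp
  also have "\<dots> = inv a \<otimes> (c \<otimes> a) \<otimes> inv a" using assms(1,2) ia by (simp only: m_assoc m_closed)
  also have "\<dots> = inv a \<otimes> (a \<otimes> c) \<otimes> inv a" by (simp only: assms(3))
  also have "\<dots> = (inv a \<otimes> a) \<otimes> (c \<otimes> inv a)" using assms(1,2) ia by (simp only: m_assoc m_closed)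
  also have "\<dots> = c \<otimes> inv a" using assms ia by simp
  finally show ?thesis .
qed

lemma (in group) comm_pow:
  assumes "a \<in> carrier G" "c \<in> carrier G" "a \<otimes> c = c \<otimes> a"
  shows "a [^] (n::nat) \<otimes> c = c \<otimes> a [^] n"
proof (induction n)
  case 0 thus ?case using assms by simp
next
  case (Suc n)
  have "a [^] n \<otimes> a \<otimes> c = c \<otimes> (a [^] n \<otimes> a)"
    by (rule comm_mult) (use assms Suc in auto)
  thus ?case by simp
qed

lemma (in group) ftrans_Int:
  assumes "ftrans G F1" "ftrans G F2" "subgroup F1 G" "subgroup F2 G"
  shows "ftrans G (F1 \<inter> F2)"
proof -
  obtain R1 where R1: "finite R1" "R1 \<subseteq> carrier G" "\<forall>x\<in>carrier G. \<exists>r\<in>R1. \<exists>f\<in>F1. x = f \<otimes> r"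
    using assms(1) unfolding ftrans_def by blast
  obtain R2 where R2: "finite R2" "R2 \<subseteq> carrier G" "\<forall>x\<in>carrier G. \<exists>r\<in>R2. \<exists>f\<in>F2. x = f \<otimes> r"
    using assms(2) unfolding ftrans_def by blast
  define Pr where "Pr r1 r2 y \<longleftrightarrow> y \<in> carrier G \<and> (\<exists>f\<in>F1. y = f \<otimes> r1) \<and> (\<exists>f\<in>F2. y = f \<otimes> r2)" for r1 r2 y
  define P where "P = {p \<in> R1 \<times> R2. \<exists>y. Pr (fst p) (snd p) y}"
  define ch where "ch p = (SOME y. Pr (fst p) (snd p) y)" for p
  define R where "R = ch ` P"
  have "P \<subseteq> R1 \<times> R2" by (auto simp: P_def)
  hence "finite P" using R1(1) R2(1) finite_subset by blast
  hence finR: "finite R" unfolding R_def by simp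
  have chP: "Pr (fst p) (snd p) (ch p)" if "p \<in> P" for p
  proof -
    have "\<exists>y. Pr (fst p) (snd p) y" using that by (simp add: P_def)
    thus ?thesis unfolding ch_def by (rule someI_ex)
  qed
  have RC: "R \<subseteq> carrier G"
  proof
    fix y assume "y \<in> R"
    then obtain p where "p \<in> P" "y = ch p" by (auto simp: R_def)
    thus "y \<in> carrier G" using chP[of p] by (simp add: Pr_def)
  qed
  have "\<forall>x\<in>carrier G. \<exists>r\<in>R. \<exists>f\<in>F1 \<inter> F2. x = f \<otimes> r"
  proof
    fix x assume x: "x \<in> carrier G"
    obtain r1 f1 where 1: "r1 \<in> R1" "f1 \<in> F1" "x = f1 \<otimes> r1" using R1(3) x by blast
    obtain r2 f2 where 2: "r2 \<in> R2" "f2 \<in> F2" "x = f2 \<otimes> r2" using R2(3) x by blast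
    have "Pr r1 r2 x" unfolding Pr_def using 1 2 x by blast
    hence pP: "(r1, r2) \<in> P" unfolding P_def using 1(1) 2(1) by auto
    define y where "y = ch (r1, r2)"
    have yP: "Pr r1 r2 y" using chP[OF pP] unfolding y_def by simp
    then obtain g1 g2 where g: "y \<in> carrier G" "g1 \<in> F1" "y = g1 \<otimes> r1" "g2 \<in> F2" "y = g2 \<otimes> r2"
      unfolding Pr_def by blast
    have c: "r1 \<in> carrier G" "r2 \<in> carrier G" "f1 \<in> carrier G" "f2 \<in> carrier G" "g1 \<in> carrier G" "g2 \<in> carrier G"
      using 1 2 g R1(2) R2(2) subgroup.mem_carrier[OF assms(3)] subgroup.mem_carrier[OF assms(4)] by auto
    have canc: "(a \<otimes> r) \<otimes> inv (b \<otimes> r) = a \<otimes> inv b"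
      if "a \<in> carrier G" "b \<in> carrier G" "r \<in> carrier G" for a b r
    proof -
      have "(a \<otimes> r) \<otimes> inv (b \<otimes> r) = a \<otimes> (r \<otimes> (inv r \<otimes> inv b))"
        using that by (simp add: inv_mult_group m_assoc)
      also have "\<dots> = a \<otimes> inv b" using that by (simp add: m_assoc[symmetric])
      finally show ?thesis .
    qed
    have e1: "x \<otimes> inv y = f1 \<otimes> inv g1"
      using 1(3) g(3) c canc by simp
    have e2: "x \<otimes> inv y = f2 \<otimes> inv g2"
      using 2(3) g(5) c canc by simp
    have "f1 \<otimes> inv g1 \<in> F1" using 1(2) g(2) assms(3) by (simp add: subgroup.m_closed subgroup.m_inv_closed)
    moreover have "f2 \<otimes> inv g2 \<in> F2" using 2(2) g(4) assms(4) by (simp add: subgroup.m_closed subgroup.m_inv_closed)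
    ultimately have "x \<otimes> inv y \<in> F1 \<inter> F2" using e1 e2 by simp
    moreover have "x = (x \<otimes> inv y) \<otimes> y" using x g(1) by (simp add: m_assoc)
    moreover have "y \<in> R" unfolding R_def y_def using pP by blast
    ultimately show "\<exists>r\<in>R. \<exists>f\<in>F1 \<inter> F2. x = f \<otimes> r" by blast
  qed
  thus ?thesis using finR RC unfolding ftrans_def by blast
qed

lemma (in group) ftrans_carrier: "ftrans G (carrier G)"
proof -
  have "\<forall>x\<in>carrier G. \<exists>r\<in>{\<one>}. \<exists>f\<in>carrier G. x = f \<otimes> r" by simp
  thus ?thesis unfolding ftrans_def by blast
qed

lemma (in group) centraliser_subgroup:
  assumes "g \<in> carrier G" shows "subgroup (centraliser G g) G"
proof
  show "centraliser G g \<subseteq> carrier G" by (auto simp: centraliser_def)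
  show "\<one> \<in> centraliser G g" using assms by (simp add: centraliser_def)
  fix x y assume x: "x \<in> centraliser G g" and y: "y \<in> centraliser G g"
  then have xc: "x \<in> carrier G" "x \<otimes> g = g \<otimes> x" and yc: "y \<in> carrier G" "y \<otimes> g = g \<otimes> y"
    by (auto simp: centraliser_def)
  have "x \<otimes> y \<otimes> g = g \<otimes> (x \<otimes> y)"
    using xc yc assms by (intro comm_mult) auto
  thus "x \<otimes> y \<in> centraliser G g" using xc yc by (simp add: centraliser_def)
  have "inv x \<otimes> g = g \<otimes> inv x"
    using xc assms by (intro comm_inv) auto
  thus "inv x \<in> centraliser G g" using xc by (simp add: centraliser_def)
qed

lemma (in group) vz_iff:
  "g \<in> virtual_centre G \<longleftrightarrow> g \<in> carrier G \<and> finite_index (centraliser G g) G"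
proof
  assume "g \<in> virtual_centre G"
  then obtain F where g: "g \<in> carrier G" and F: "finite_index F G" "\<forall>f\<in>F. g \<otimes> f = f \<otimes> g"
    unfolding virtual_centre_def by blast
  have sF: "subgroup F G" using F(1) by (simp add: finite_index_def)
  have "F \<subseteq> centraliser G g" using F(2) subgroup.mem_carrier[OF sF] by (auto simp: centraliser_def)
  hence "ftrans G (centraliser G g)" using ftrans_mono F(1) fi_ftrans[OF sF] by blast
  thus "g \<in> carrier G \<and> finite_index (centraliser G g) G"
    using g fi_ftrans[OF centraliser_subgroup[OF g]] by simp
next
  assume a: "g \<in> carrier G \<and> finite_index (centraliser G g) G"
  have "\<forall>f\<in>centraliser G g. g \<otimes> f = f \<otimes> g" by (simp add: centraliser_def)
  thus "g \<in> virtual_centre G" using a unfolding virtual_centre_def by blast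
qed

lemma (in group) vz_subgroup: "subgroup (virtual_centre G) G"
proof
  show "virtual_centre G \<subseteq> carrier G" by (auto simp: virtual_centre_def)
  have "centraliser G \<one> = carrier G" by (auto simp: centraliser_def)
  thus "\<one> \<in> virtual_centre G" using vz_iff fi_ftrans[OF subgroup_self] ftrans_carrier by simp
  fix x y assume x: "x \<in> virtual_centre G" and y: "y \<in> virtual_centre G"
  hence xc: "x \<in> carrier G" "ftrans G (centraliser G x)" and yc: "y \<in> carrier G" "ftrans G (centraliser G y)"
    using vz_iff fi_ftrans centraliser_subgroup by auto
  have "ftrans G (centraliser G x \<inter> centraliser G y)"
    using ftrans_Int xc yc centraliser_subgroup by simp
  moreover have "centraliser G x \<inter> centraliser G y \<subseteq> centraliser G (x \<otimes> y)"
  proof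
    fix g assume "g \<in> centraliser G x \<inter> centraliser G y"
    hence g: "g \<in> carrier G" "g \<otimes> x = x \<otimes> g" "g \<otimes> y = y \<otimes> g" by (auto simp: centraliser_def)
    have "x \<otimes> y \<otimes> g = g \<otimes> (x \<otimes> y)" using comm_mult[of x y g] g xc yc by simp
    thus "g \<in> centraliser G (x \<otimes> y)" using g xc yc by (simp add: centraliser_def)
  qed
  ultimately have "ftrans G (centraliser G (x \<otimes> y))" using ftrans_mono by blast
  thus "x \<otimes> y \<in> virtual_centre G" using vz_iff fi_ftrans centraliser_subgroup xc yc by simp
  have "centraliser G x \<subseteq> centraliser G (inv x)"
  proof
    fix g assume "g \<in> centraliser G x"
    hence g: "g \<in> carrier G" "g \<otimes> x = x \<otimes> g" by (auto simp: centraliser_def)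
    have "inv x \<otimes> g = g \<otimes> inv x" using comm_inv[of x g] g xc by simp
    thus "g \<in> centraliser G (inv x)" using g xc by (simp add: centraliser_def)
  qed
  hence "ftrans G (centraliser G (inv x))" using ftrans_mono xc by blast
  thus "inv x \<in> virtual_centre G" using vz_iff fi_ftrans centraliser_subgroup xc by simp
qed

lemma (in group) stable_vz:
  assumes "almost_stable_centralisers G" "u \<in> carrier G" "(m::nat) \<ge> 1" "finite_index F G"
    "\<forall>f\<in>F. u [^] m \<otimes> f = f \<otimes> u [^] m"
  shows "u \<in> virtual_centre G"
proof -
  have sF: "subgroup F G" using assms(4) by (simp add: finite_index_def)
  have um: "u [^] m \<in> carrier G" using assms(2) by simp
  have "F \<subseteq> centraliser G (u [^] m)" using assms(5) subgroup.mem_carrier[OF sF] by (auto simp: centraliser_def)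
  hence t1: "ftrans G (centraliser G (u [^] m))" using ftrans_mono assms(4) fi_ftrans[OF sF] by blast
  let ?C = "G\<lparr>carrier := centraliser G (u [^] m)\<rparr>"
  have fi2: "finite_index (centraliser G u) ?C" using assms(1-3) unfolding almost_stable_centralisers_def by blast
  have gC: "group ?C" using subgroup.subgroup_is_group[OF centraliser_subgroup[OF um] is_group] .
  have "subgroup (centraliser G u) ?C" using fi2 by (simp add: finite_index_def)
  hence t2: "ftrans ?C (centraliser G u)" using group.fi_ftrans[OF gC] fi2 by blast
  have sub: "centraliser G u \<subseteq> centraliser G (u [^] m)"
  proof
    fix x assume "x \<in> centraliser G u"
    hence x: "x \<in> carrier G" "x \<otimes> u = u \<otimes> x" by (auto simp: centraliser_def)
    have "u [^] m \<otimes> x = x \<otimes> u [^] m" using comm_pow[of u x m] x assms(2) by simp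
    thus "x \<in> centraliser G (u [^] m)" using x by (simp add: centraliser_def)
  qed
  have "ftrans G (centraliser G u)"
    using ftrans_trans[OF t1 t2 _ sub] by (auto simp: centraliser_def)
  thus ?thesis using vz_iff fi_ftrans centraliser_subgroup assms(2) by simp
qed




locale setting =
  fixes H :: "('h, 'c) monoid_scheme" and K :: "('k, 'd) monoid_scheme"
    and A :: "nat \<Rightarrow> ('a, 'e) monoid_scheme" and n :: nat
    and \<phi> :: "'h \<times> 'k \<Rightarrow> (nat \<Rightarrow> 'a)"
  assumes grH: "group H" and grK: "group K" and grA: "\<And>i. i \<in> {1..n} \<Longrightarrow> group (A i)"
    and hom: "\<phi> \<in> hom (H \<times>\<times> K) (product_group {1..n} A)"
    and inj: "inj_on \<phi> (carrier (H \<times>\<times> K))"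
    and fi: "finite_index (\<phi> ` carrier (H \<times>\<times> K)) (product_group {1..n} A)"
    and asc: "\<And>i. i \<in> {1..n} \<Longrightarrow> almost_stable_centralisers (A i)"
begin

abbreviation "I \<equiv> {1..n}"
abbreviation "P \<equiv> product_group I A"
abbreviation "HK \<equiv> H \<times>\<times> K"

definition e :: "nat \<Rightarrow> 'a \<Rightarrow> nat \<Rightarrow> 'a" where
  "e i a = (\<lambda>l\<in>I. if l = i then a else \<one>\<^bsub>A l\<^esub>)"

lemma grP: "group P" using product_group[of I A] grA by blast
lemma grHK: "group HK" using grH grK by (rule DirProd_group)

lemma e_app: "l \<in> I \<Longrightarrow> e i a l = (if l = i then a else \<one>\<^bsub>A l\<^esub>)"
  by (simp add: e_def)

lemma e_carrier: "i \<in> I \<Longrightarrow> a \<in> carrier (A i) \<Longrightarrow> e i a \<in> carrier P"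
  using grA by (auto simp: e_def PiE_iff group.is_monoid monoid.one_closed)

lemma e_mult: "i \<in> I \<Longrightarrow> a \<in> carrier (A i) \<Longrightarrow> b \<in> carrier (A i) \<Longrightarrow>
    e i a \<otimes>\<^bsub>P\<^esub> e i b = e i (a \<otimes>\<^bsub>A i\<^esub> b)"
  using grA by (auto simp: e_def group.is_monoid monoid.one_closed monoid.l_one intro!: restrict_ext)

lemma e_one: "i \<in> I \<Longrightarrow> e i \<one>\<^bsub>A i\<^esub> = \<one>\<^bsub>P\<^esub>"
  by (auto simp: e_def intro!: restrict_ext)

lemma e_pow: assumes "i \<in> I" "a \<in> carrier (A i)"
  shows "e i a [^]\<^bsub>P\<^esub> (m::nat) = e i (a [^]\<^bsub>A i\<^esub> m)"
proof (induction m)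
  case 0 thus ?case using e_one[OF assms(1)] grP grA[OF assms(1)]
    by (simp add: group.is_monoid monoid.nat_pow_0)
next
  case (Suc m)
  have mA: "monoid (A i)" using grA[OF assms(1)] by (simp add: group.is_monoid)
  have mP: "monoid P" using grP by (simp add: group.is_monoid)
  have "e i a [^]\<^bsub>P\<^esub> Suc m = e i a [^]\<^bsub>P\<^esub> m \<otimes>\<^bsub>P\<^esub> e i a" using monoid.nat_pow_Suc[OF mP] by simp
  also have "\<dots> = e i (a [^]\<^bsub>A i\<^esub> m \<otimes>\<^bsub>A i\<^esub> a)"
    using Suc e_mult[OF assms(1) _ assms(2)] monoid.nat_pow_closed[OF mA assms(2)] by simp
  also have "\<dots> = e i (a [^]\<^bsub>A i\<^esub> Suc m)" using monoid.nat_pow_Suc[OF mA] by simp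
  finally show ?case .
qed

lemma commP:
  assumes "f \<in> carrier P" "g \<in> carrier P"
  shows "f \<otimes>\<^bsub>P\<^esub> g = g \<otimes>\<^bsub>P\<^esub> f \<longleftrightarrow> (\<forall>l\<in>I. f l \<otimes>\<^bsub>A l\<^esub> g l = g l \<otimes>\<^bsub>A l\<^esub> f l)"
proof
  assume "f \<otimes>\<^bsub>P\<^esub> g = g \<otimes>\<^bsub>P\<^esub> f"
  hence eqf: "(\<lambda>l\<in>I. f l \<otimes>\<^bsub>A l\<^esub> g l) = (\<lambda>l\<in>I. g l \<otimes>\<^bsub>A l\<^esub> f l)" by (simp only: mult_product_group)
  show "\<forall>l\<in>I. f l \<otimes>\<^bsub>A l\<^esub> g l = g l \<otimes>\<^bsub>A l\<^esub> f l"
  proof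
    fix l assume l: "l \<in> I"
    have "(\<lambda>l\<in>I. f l \<otimes>\<^bsub>A l\<^esub> g l) l = (\<lambda>l\<in>I. g l \<otimes>\<^bsub>A l\<^esub> f l) l" using eqf by (rule arg_cong)
    thus "f l \<otimes>\<^bsub>A l\<^esub> g l = g l \<otimes>\<^bsub>A l\<^esub> f l" using l by (simp only: restrict_apply' )
  qed
next
  assume a: "\<forall>l\<in>I. f l \<otimes>\<^bsub>A l\<^esub> g l = g l \<otimes>\<^bsub>A l\<^esub> f l"
  have "(\<lambda>l\<in>I. f l \<otimes>\<^bsub>A l\<^esub> g l) = (\<lambda>l\<in>I. g l \<otimes>\<^bsub>A l\<^esub> f l)"
    by (rule restrict_ext) (use a in blast)
  thus "f \<otimes>\<^bsub>P\<^esub> g = g \<otimes>\<^bsub>P\<^esub> f" by (simp only: mult_product_group)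
qed

lemma phi_carrier: "p \<in> carrier HK \<Longrightarrow> \<phi> p \<in> carrier P"
  using hom by (rule hom_in_carrier)

lemma phi_coord_carrier: "p \<in> carrier HK \<Longrightarrow> l \<in> I \<Longrightarrow> \<phi> p l \<in> carrier (A l)"
  using phi_carrier[of p] by (auto simp: PiE_iff)

lemma coord_mult: "p \<in> carrier HK \<Longrightarrow> q \<in> carrier HK \<Longrightarrow> l \<in> I \<Longrightarrow>
    \<phi> (p \<otimes>\<^bsub>HK\<^esub> q) l = \<phi> p l \<otimes>\<^bsub>A l\<^esub> \<phi> q l"
  using hom_mult[OF hom] by simp

lemma comm_lift:
  assumes "p \<in> carrier HK" "q \<in> carrier HK" "\<phi> p \<otimes>\<^bsub>P\<^esub> \<phi> q = \<phi> q \<otimes>\<^bsub>P\<^esub> \<phi> p"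
  shows "p \<otimes>\<^bsub>HK\<^esub> q = q \<otimes>\<^bsub>HK\<^esub> p"
proof -
  have "\<phi> (p \<otimes>\<^bsub>HK\<^esub> q) = \<phi> (q \<otimes>\<^bsub>HK\<^esub> p)" using assms hom_mult[OF hom] by simp
  moreover have mHK: "monoid HK" using grHK by (rule group.is_monoid)
  have c1: "p \<otimes>\<^bsub>HK\<^esub> q \<in> carrier HK" by (rule monoid.m_closed[OF mHK assms(1,2)])
  have c2: "q \<otimes>\<^bsub>HK\<^esub> p \<in> carrier HK" by (rule monoid.m_closed[OF mHK assms(2,1)])
  moreover note c1 c2
  ultimately show ?thesis using inj_onD[OF inj] by blast
qed

lemma comm_coord:
  assumes "p \<in> carrier HK" "q \<in> carrier HK" "p \<otimes>\<^bsub>HK\<^esub> q = q \<otimes>\<^bsub>HK\<^esub> p" "l \<in> I"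
  shows "\<phi> p l \<otimes>\<^bsub>A l\<^esub> \<phi> q l = \<phi> q l \<otimes>\<^bsub>A l\<^esub> \<phi> p l"
  using coord_mult[OF assms(1,2,4)] coord_mult[OF assms(2,1,4)] assms(3) by simp

definition uc :: "'h \<Rightarrow> nat \<Rightarrow> 'a" where "uc u l = \<phi> (u, \<one>\<^bsub>K\<^esub>) l"

lemma uc_carrier: "u \<in> carrier H \<Longrightarrow> l \<in> I \<Longrightarrow> uc u l \<in> carrier (A l)"
  unfolding uc_def using phi_coord_carrier grK by (simp add: group.is_monoid monoid.one_closed)

lemma E_exists:
  assumes "u \<in> carrier H" "i \<in> I"
  shows "\<exists>m::nat. m \<ge> 1 \<and> (\<exists>q\<in>carrier HK. \<phi> q = e i (uc u i [^]\<^bsub>A i\<^esub> m))"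
proof -
  have ec: "e i (uc u i) \<in> carrier P" using e_carrier assms uc_carrier by simp
  obtain m :: nat where m: "m \<ge> 1" "e i (uc u i) [^]\<^bsub>P\<^esub> m \<in> \<phi> ` carrier HK"
    using group.pigeon[OF grP fi ec] by blast
  then obtain q where q: "q \<in> carrier HK" "\<phi> q = e i (uc u i) [^]\<^bsub>P\<^esub> m" by (metis imageE)
  have "\<phi> q = e i (uc u i [^]\<^bsub>A i\<^esub> m)" using q(2) e_pow[OF assms(2) uc_carrier[OF assms]] by simp
  thus ?thesis using m(1) q(1) by blast
qed

end



context setting begin

lemma oneK: "\<one>\<^bsub>K\<^esub> \<in> carrier K" using grK by (simp add: group.is_monoid monoid.one_closed)
lemma oneH: "\<one>\<^bsub>H\<^esub> \<in> carrier H" using grH by (simp add: group.is_monoid monoid.one_closed)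

lemma LemA1:
  assumes u: "u \<in> carrier H" and i: "i \<in> I" and q: "q \<in> carrier HK"
    and qe: "\<phi> q = e i (uc u i [^]\<^bsub>A i\<^esub> (m::nat))" and x: "x \<in> centraliser H u"
  shows "x \<otimes>\<^bsub>H\<^esub> fst q = fst q \<otimes>\<^bsub>H\<^esub> x"
proof -
  have xc: "x \<in> carrier H" "x \<otimes>\<^bsub>H\<^esub> u = u \<otimes>\<^bsub>H\<^esub> x" using x by (auto simp: centraliser_def)
  have px: "(x, \<one>\<^bsub>K\<^esub>) \<in> carrier HK" and pu: "(u, \<one>\<^bsub>K\<^esub>) \<in> carrier HK" using xc u oneK by simp_all
  have "(x, \<one>\<^bsub>K\<^esub>) \<otimes>\<^bsub>HK\<^esub> (u, \<one>\<^bsub>K\<^esub>) = (u, \<one>\<^bsub>K\<^esub>) \<otimes>\<^bsub>HK\<^esub> (x, \<one>\<^bsub>K\<^esub>)" using xc(2) by simp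
  hence ci: "\<phi> (x, \<one>\<^bsub>K\<^esub>) i \<otimes>\<^bsub>A i\<^esub> uc u i = uc u i \<otimes>\<^bsub>A i\<^esub> \<phi> (x, \<one>\<^bsub>K\<^esub>) i"
    using comm_coord[OF px pu _ i] unfolding uc_def by simp
  have gA: "group (A i)" using grA i .
  have xi: "\<phi> (x, \<one>\<^bsub>K\<^esub>) i \<in> carrier (A i)" using phi_coord_carrier[OF px i] .
  have ui: "uc u i \<in> carrier (A i)" using uc_carrier[OF u i] .
  have cm: "uc u i [^]\<^bsub>A i\<^esub> m \<otimes>\<^bsub>A i\<^esub> \<phi> (x, \<one>\<^bsub>K\<^esub>) i = \<phi> (x, \<one>\<^bsub>K\<^esub>) i \<otimes>\<^bsub>A i\<^esub> uc u i [^]\<^bsub>A i\<^esub> m"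
    using group.comm_pow[OF gA ui xi ci[symmetric]] .
  have "\<phi> (x, \<one>\<^bsub>K\<^esub>) \<otimes>\<^bsub>P\<^esub> \<phi> q = \<phi> q \<otimes>\<^bsub>P\<^esub> \<phi> (x, \<one>\<^bsub>K\<^esub>)"
  proof (subst commP[OF phi_carrier[OF px] phi_carrier[OF q]], intro ballI)
    fix l assume l: "l \<in> I"
    show "\<phi> (x, \<one>\<^bsub>K\<^esub>) l \<otimes>\<^bsub>A l\<^esub> \<phi> q l = \<phi> q l \<otimes>\<^bsub>A l\<^esub> \<phi> (x, \<one>\<^bsub>K\<^esub>) l"
    proof (cases "l = i")
      case True
      have "\<phi> q l = uc u i [^]\<^bsub>A i\<^esub> m" using qe e_app[OF l] True by simp
      thus ?thesis using cm True by simp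
    next
      case False
      have "\<phi> q l = \<one>\<^bsub>A l\<^esub>" using qe e_app[OF l] False by simp
      moreover have "\<phi> (x, \<one>\<^bsub>K\<^esub>) l \<in> carrier (A l)" using phi_coord_carrier[OF px l] .
      ultimately show ?thesis using grA[OF l] by (simp add: group.is_monoid monoid.l_one monoid.r_one)
    qed
  qed
  hence "(x, \<one>\<^bsub>K\<^esub>) \<otimes>\<^bsub>HK\<^esub> q = q \<otimes>\<^bsub>HK\<^esub> (x, \<one>\<^bsub>K\<^esub>)" by (rule comm_lift[OF px q])
  moreover obtain a b where ab: "q = (a, b)" by (cases q)
  ultimately show ?thesis by simp
qed

lemma LemA2:
  assumes u: "u \<in> carrier H" and i: "i \<in> I" and m: "(m::nat) \<ge> 1" and q: "q \<in> carrier HK"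
    and qe: "\<phi> q = e i (uc u i [^]\<^bsub>A i\<^esub> m)" and q1: "fst q = \<one>\<^bsub>H\<^esub>"
  shows "uc u i \<in> virtual_centre (A i)"
proof -
  have gA: "group (A i)" using grA i .
  define \<pi> where "\<pi> p = \<phi> p i" for p
  have hom\<pi>: "\<pi> \<in> hom HK (A i)"
  proof (rule homI)
    fix x assume "x \<in> carrier HK" thus "\<pi> x \<in> carrier (A i)" unfolding \<pi>_def by (rule phi_coord_carrier[OF _ i])
  next
    fix x y assume "x \<in> carrier HK" "y \<in> carrier HK"
    thus "\<pi> (x \<otimes>\<^bsub>HK\<^esub> y) = \<pi> x \<otimes>\<^bsub>A i\<^esub> \<pi> y" unfolding \<pi>_def by (rule coord_mult[OF _ _ i])
  qed
  have ghom: "group_hom HK (A i) \<pi>"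
    unfolding group_hom_def group_hom_axioms_def using grHK gA hom\<pi> by blast
  define F where "F = \<pi> ` carrier HK"
  have sF: "subgroup F (A i)" using group_hom.img_is_subgroup[OF ghom] F_def by simp
  have G0: "subgroup (\<phi> ` carrier HK) P" using fi by (simp add: finite_index_def)
  have "ftrans P (\<phi> ` carrier HK)" using group.fi_ftrans[OF grP G0] fi by simp
  then obtain R0 where R0: "finite R0" "R0 \<subseteq> carrier P"
    "\<forall>x\<in>carrier P. \<exists>r\<in>R0. \<exists>f\<in>\<phi> ` carrier HK. x = f \<otimes>\<^bsub>P\<^esub> r" unfolding ftrans_def by blast
  have "ftrans (A i) F"
    unfolding ftrans_def
  proof (intro exI[of _ "(\<lambda>r. r i) ` R0"] conjI ballI)
    show "finite ((\<lambda>r. r i) ` R0)" using R0(1) by simp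
    show "(\<lambda>r. r i) ` R0 \<subseteq> carrier (A i)"
    proof
      fix y assume "y \<in> (\<lambda>r. r i) ` R0"
      then obtain r where "r \<in> R0" "y = r i" by blast
      thus "y \<in> carrier (A i)" using R0(2) i by (auto simp: PiE_iff)
    qed
    fix a assume a: "a \<in> carrier (A i)"
    obtain r f where rf: "r \<in> R0" "f \<in> \<phi> ` carrier HK" "e i a = f \<otimes>\<^bsub>P\<^esub> r"
      using R0(3) e_carrier[OF i a] by blast
    obtain p where p: "p \<in> carrier HK" "f = \<phi> p" using rf(2) by blast
    have "a = e i a i" using e_app[OF i] by simp
    also have "\<dots> = f i \<otimes>\<^bsub>A i\<^esub> r i" using rf(3) i by simp
    finally have "a = \<pi> p \<otimes>\<^bsub>A i\<^esub> r i" using p by (simp add: \<pi>_def)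
    moreover have "\<pi> p \<in> F" using p(1) by (simp add: F_def)
    ultimately show "\<exists>r'\<in>(\<lambda>r. r i) ` R0. \<exists>f\<in>F. a = f \<otimes>\<^bsub>A i\<^esub> r'" using rf(1) by blast
  qed
  hence fiF: "finite_index F (A i)" using group.fi_ftrans[OF gA sF] by simp
  have ui: "uc u i \<in> carrier (A i)" using uc_carrier[OF u i] .
  have pu: "(u, \<one>\<^bsub>K\<^esub>) \<in> carrier HK" using u oneK by simp
  have sq: "snd q \<in> carrier K" using q by auto
  have qq: "q = (\<one>\<^bsub>H\<^esub>, snd q)" using q1 by (metis prod.collapse)
  have qi: "\<phi> q i = uc u i [^]\<^bsub>A i\<^esub> m" using qe e_app[OF i] by simp
  have comm: "\<forall>f\<in>F. uc u i [^]\<^bsub>A i\<^esub> m \<otimes>\<^bsub>A i\<^esub> f = f \<otimes>\<^bsub>A i\<^esub> uc u i [^]\<^bsub>A i\<^esub> m"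
  proof
    fix f assume "f \<in> F"
    then obtain p where p: "p \<in> carrier HK" "f = \<phi> p i" by (auto simp: F_def \<pi>_def)
    obtain h' k' where hk: "p = (h', k')" "h' \<in> carrier H" "k' \<in> carrier K" using p(1) by auto
    have ph: "(h', \<one>\<^bsub>K\<^esub>) \<in> carrier HK" "(\<one>\<^bsub>H\<^esub>, k') \<in> carrier HK" using hk oneH oneK by simp_all
    have split: "p = (h', \<one>\<^bsub>K\<^esub>) \<otimes>\<^bsub>HK\<^esub> (\<one>\<^bsub>H\<^esub>, k')"
      using hk grH grK by (simp add: group.is_monoid monoid.l_one monoid.r_one)
    have fsplit: "f = \<phi> (h', \<one>\<^bsub>K\<^esub>) i \<otimes>\<^bsub>A i\<^esub> \<phi> (\<one>\<^bsub>H\<^esub>, k') i"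
      using p(2) split coord_mult[OF ph i] by simp
    have c1: "q \<otimes>\<^bsub>HK\<^esub> (h', \<one>\<^bsub>K\<^esub>) = (h', \<one>\<^bsub>K\<^esub>) \<otimes>\<^bsub>HK\<^esub> q"
      using hk sq grH grK qq by (metis mult_DirProd group.is_monoid monoid.l_one monoid.r_one)
    have c1': "uc u i [^]\<^bsub>A i\<^esub> m \<otimes>\<^bsub>A i\<^esub> \<phi> (h', \<one>\<^bsub>K\<^esub>) i = \<phi> (h', \<one>\<^bsub>K\<^esub>) i \<otimes>\<^bsub>A i\<^esub> uc u i [^]\<^bsub>A i\<^esub> m"
      using comm_coord[OF q ph(1) c1 i] qi by simp
    have c2: "(u, \<one>\<^bsub>K\<^esub>) \<otimes>\<^bsub>HK\<^esub> (\<one>\<^bsub>H\<^esub>, k') = (\<one>\<^bsub>H\<^esub>, k') \<otimes>\<^bsub>HK\<^esub> (u, \<one>\<^bsub>K\<^esub>)"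
      using hk u grH grK by (simp add: group.is_monoid monoid.l_one monoid.r_one)
    have c2': "uc u i \<otimes>\<^bsub>A i\<^esub> \<phi> (\<one>\<^bsub>H\<^esub>, k') i = \<phi> (\<one>\<^bsub>H\<^esub>, k') i \<otimes>\<^bsub>A i\<^esub> uc u i"
      using comm_coord[OF pu ph(2) c2 i] unfolding uc_def .
    have kc: "\<phi> (\<one>\<^bsub>H\<^esub>, k') i \<in> carrier (A i)" using phi_coord_carrier[OF ph(2) i] .
    have hc: "\<phi> (h', \<one>\<^bsub>K\<^esub>) i \<in> carrier (A i)" using phi_coord_carrier[OF ph(1) i] .
    have c3: "uc u i [^]\<^bsub>A i\<^esub> m \<otimes>\<^bsub>A i\<^esub> \<phi> (\<one>\<^bsub>H\<^esub>, k') i = \<phi> (\<one>\<^bsub>H\<^esub>, k') i \<otimes>\<^bsub>A i\<^esub> uc u i [^]\<^bsub>A i\<^esub> m"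
      using group.comm_pow[OF gA ui kc c2'] .
    have um: "uc u i [^]\<^bsub>A i\<^esub> m \<in> carrier (A i)" using gA ui by (simp add: group.is_monoid monoid.nat_pow_closed)
    have "(\<phi> (h', \<one>\<^bsub>K\<^esub>) i \<otimes>\<^bsub>A i\<^esub> \<phi> (\<one>\<^bsub>H\<^esub>, k') i) \<otimes>\<^bsub>A i\<^esub> uc u i [^]\<^bsub>A i\<^esub> m
        = uc u i [^]\<^bsub>A i\<^esub> m \<otimes>\<^bsub>A i\<^esub> (\<phi> (h', \<one>\<^bsub>K\<^esub>) i \<otimes>\<^bsub>A i\<^esub> \<phi> (\<one>\<^bsub>H\<^esub>, k') i)"
      using group.comm_mult[OF gA hc kc um c1'[symmetric] c3[symmetric]] .
    thus "uc u i [^]\<^bsub>A i\<^esub> m \<otimes>\<^bsub>A i\<^esub> f = f \<otimes>\<^bsub>A i\<^esub> uc u i [^]\<^bsub>A i\<^esub> m" using fsplit by simp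
  qed
  show ?thesis using group.stable_vz[OF gA asc[OF i] ui m fiF comm] .
qed

end



lemma pow1: assumes "group G" "x \<in> carrier G" shows "x [^]\<^bsub>G\<^esub> (1::nat) = x"
proof -
  have m: "monoid G" using assms(1) by (rule group.is_monoid)
  have "x [^]\<^bsub>G\<^esub> (Suc 0) = x [^]\<^bsub>G\<^esub> (0::nat) \<otimes>\<^bsub>G\<^esub> x" by (rule monoid.nat_pow_Suc[OF m])
  also have "\<dots> = x" using monoid.nat_pow_0[OF m] monoid.l_one[OF m assms(2)] by simp
  finally show ?thesis by simp
qed

lemma S_carrier: "IMC_generating_set H S \<Longrightarrow> S \<subseteq> carrier H"
  unfolding IMC_generating_set_def by (elim conjE)

context setting begin

lemma indep:
  assumes S: "IMC_generating_set H S" and "s \<in> S" "t \<in> S" "s \<noteq> t"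
  shows "s \<otimes>\<^bsub>H\<^esub> t \<noteq> t \<otimes>\<^bsub>H\<^esub> s"
proof -
  have c: "s \<in> carrier H" "t \<in> carrier H" using S_carrier[OF S] assms(2,3) by blast+
  have "s [^]\<^bsub>H\<^esub> (1::nat) \<otimes>\<^bsub>H\<^esub> t [^]\<^bsub>H\<^esub> (1::nat) \<noteq> t [^]\<^bsub>H\<^esub> (1::nat) \<otimes>\<^bsub>H\<^esub> s [^]\<^bsub>H\<^esub> (1::nat)"
  proof -
    from S have IND: "\<forall>s1 \<in> S. \<forall>s2 \<in> S. s1 \<noteq> s2 \<longrightarrow> (\<forall>(p::nat) (q::nat). p \<ge> 1 \<longrightarrow> q \<ge> 1 \<longrightarrow>
        s1 [^]\<^bsub>H\<^esub> p \<otimes>\<^bsub>H\<^esub> s2 [^]\<^bsub>H\<^esub> q \<noteq> s2 [^]\<^bsub>H\<^esub> q \<otimes>\<^bsub>H\<^esub> s1 [^]\<^bsub>H\<^esub> p)"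
      unfolding IMC_generating_set_def by (elim conjE)
    show ?thesis using IND[rule_format, of s t 1 1] assms(2-4) by simp
  qed
  thus ?thesis using pow1[OF grH c(1)] pow1[OF grH c(2)] by simp
qed

lemma LemB:
  assumes S: "IMC_generating_set H S" and uS: "u \<in> S" and i: "i \<in> I"
    and nvz: "uc u i \<notin> virtual_centre (A i)" and m: "(m::nat) \<ge> 1" and q: "q \<in> carrier HK"
    and qe: "\<phi> q = e i (uc u i [^]\<^bsub>A i\<^esub> m)"
  shows "fst q \<noteq> \<one>\<^bsub>H\<^esub> \<and> centraliser H u = centraliser H (fst q)"
proof -
  have u: "u \<in> carrier H" using S_carrier[OF S] uS by blast
  have ne: "fst q \<noteq> \<one>\<^bsub>H\<^esub>" using LemA2[OF u i m q qe] nvz by blast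
  have sub: "centraliser H u \<subseteq> centraliser H (fst q)"
  proof
    fix x assume x: "x \<in> centraliser H u"
    have "x \<otimes>\<^bsub>H\<^esub> fst q = fst q \<otimes>\<^bsub>H\<^esub> x" using LemA1[OF u i q qe x] .
    moreover have "x \<in> carrier H" using x by (simp add: centraliser_def)
    ultimately show "x \<in> centraliser H (fst q)" by (simp add: centraliser_def)
  qed
  have fq: "fst q \<in> carrier H" using q by auto
  have MC: "\<forall>s\<in>S. \<forall>g\<in>carrier H. centraliser H s \<subset> centraliser H g \<longrightarrow> g = \<one>\<^bsub>H\<^esub>"
    using S by (simp add: IMC_generating_set_def)
  have "centraliser H u = centraliser H (fst q)"
  proof (rule ccontr)
    assume "centraliser H u \<noteq> centraliser H (fst q)"
    hence "centraliser H u \<subset> centraliser H (fst q)" using sub by blast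
    hence "fst q = \<one>\<^bsub>H\<^esub>" using MC uS fq by blast
    thus False using ne by blast
  qed
  thus ?thesis using ne by blast
qed

lemma comm_supp:
  assumes "f \<in> carrier P" "g \<in> carrier P" "i \<in> I" "\<forall>j\<in>I. j \<noteq> i \<longrightarrow> g j = \<one>\<^bsub>A j\<^esub>"
    "f i \<otimes>\<^bsub>A i\<^esub> g i = g i \<otimes>\<^bsub>A i\<^esub> f i"
  shows "f \<otimes>\<^bsub>P\<^esub> g = g \<otimes>\<^bsub>P\<^esub> f"
proof (subst commP[OF assms(1,2)], intro ballI)
  fix j assume j: "j \<in> I"
  show "f j \<otimes>\<^bsub>A j\<^esub> g j = g j \<otimes>\<^bsub>A j\<^esub> f j"
  proof (cases "j = i")
    case True thus ?thesis using assms(5) by simp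
  next
    case False
    hence "g j = \<one>\<^bsub>A j\<^esub>" using assms(4) j by blast
    moreover have "f j \<in> carrier (A j)" using assms(1) j by (auto simp: PiE_iff)
    ultimately show ?thesis using grA[OF j] by (simp add: group.is_monoid monoid.l_one monoid.r_one)
  qed
qed

lemma fst_comm:
  assumes "p \<in> carrier HK" "q \<in> carrier HK" "\<phi> p \<otimes>\<^bsub>P\<^esub> \<phi> q = \<phi> q \<otimes>\<^bsub>P\<^esub> \<phi> p"
  shows "fst p \<otimes>\<^bsub>H\<^esub> fst q = fst q \<otimes>\<^bsub>H\<^esub> fst p"
proof -
  have "p \<otimes>\<^bsub>HK\<^esub> q = q \<otimes>\<^bsub>HK\<^esub> p" using comm_lift[OF assms] .
  moreover obtain a b where "p = (a, b)" by (cases p)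
  moreover obtain c d where "q = (c, d)" by (cases q)
  ultimately show ?thesis by simp
qed

lemma cross:
  assumes S: "IMC_generating_set H S" and sS: "s \<in> S" and tS: "t \<in> S" and st: "s \<noteq> t"
    and i: "i \<in> I" and l: "l \<in> I" and li: "l \<noteq> i"
    and nvs: "uc s i \<notin> virtual_centre (A i)" and nvt: "uc t l \<notin> virtual_centre (A l)"
  shows False
proof -
  have sc: "s \<in> carrier H" and tc: "t \<in> carrier H" using S_carrier[OF S] sS tS by blast+
  obtain m1 q1 where q1: "(m1::nat) \<ge> 1" "q1 \<in> carrier HK" "\<phi> q1 = e i (uc s i [^]\<^bsub>A i\<^esub> m1)"
    using E_exists[OF sc i] by blast
  obtain m2 q2 where q2: "(m2::nat) \<ge> 1" "q2 \<in> carrier HK" "\<phi> q2 = e l (uc t l [^]\<^bsub>A l\<^esub> m2)"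
    using E_exists[OF tc l] by blast
  have B1: "centraliser H s = centraliser H (fst q1)" using LemB[OF S sS i nvs q1] by blast
  have B2: "centraliser H t = centraliser H (fst q2)" using LemB[OF S tS l nvt q2] by blast
  have z1: "\<forall>j\<in>I. j \<noteq> i \<longrightarrow> \<phi> q1 j = \<one>\<^bsub>A j\<^esub>" using q1(3) e_app by simp
  have z2: "\<phi> q2 i = \<one>\<^bsub>A i\<^esub>" using q2(3) e_app[OF i] li by simp
  have ci: "\<phi> q2 i \<otimes>\<^bsub>A i\<^esub> \<phi> q1 i = \<phi> q1 i \<otimes>\<^bsub>A i\<^esub> \<phi> q2 i"
    using z2 phi_coord_carrier[OF q1(2) i] grA[OF i] by (simp add: group.is_monoid monoid.l_one monoid.r_one)
  have "\<phi> q2 \<otimes>\<^bsub>P\<^esub> \<phi> q1 = \<phi> q1 \<otimes>\<^bsub>P\<^esub> \<phi> q2"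
    using comm_supp[OF phi_carrier[OF q2(2)] phi_carrier[OF q1(2)] i z1 ci] .
  hence c: "fst q2 \<otimes>\<^bsub>H\<^esub> fst q1 = fst q1 \<otimes>\<^bsub>H\<^esub> fst q2" using fst_comm[OF q2(2) q1(2)] by blast
  have f2: "fst q2 \<in> carrier H" using q2(2) by auto
  hence "fst q2 \<in> centraliser H (fst q1)" using c by (simp add: centraliser_def)
  hence "fst q2 \<in> centraliser H s" using B1 by simp
  hence "s \<in> centraliser H (fst q2)" using sc by (simp add: centraliser_def)
  hence "s \<in> centraliser H t" using B2 by simp
  hence "s \<otimes>\<^bsub>H\<^esub> t = t \<otimes>\<^bsub>H\<^esub> s" by (simp add: centraliser_def)
  thus False using indep[OF S sS tS st] by blast
qed

lemma vzclaim:
  assumes S: "IMC_generating_set H S" and sS: "s \<in> S" and tS: "t \<in> S" and st: "s \<noteq> t"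
    and i: "i \<in> I" and nvs: "uc s i \<notin> virtual_centre (A i)" and vt: "uc t i \<in> virtual_centre (A i)"
  shows False
proof -
  have gA: "group (A i)" using grA[OF i] .
  have mA: "monoid (A i)" using gA by (rule group.is_monoid)
  have sc: "s \<in> carrier H" and tc: "t \<in> carrier H" using S_carrier[OF S] sS tS by blast+
  obtain m1 q1 where q1: "(m1::nat) \<ge> 1" "q1 \<in> carrier HK" "\<phi> q1 = e i (uc s i [^]\<^bsub>A i\<^esub> m1)"
    using E_exists[OF sc i] by blast
  obtain F where F: "finite_index F (A i)" "\<forall>f\<in>F. uc t i \<otimes>\<^bsub>A i\<^esub> f = f \<otimes>\<^bsub>A i\<^esub> uc t i"
    using vt unfolding virtual_centre_def by blast
  have si: "uc s i \<in> carrier (A i)" using uc_carrier[OF sc i] .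
  define a where "a = uc s i [^]\<^bsub>A i\<^esub> m1"
  have ac: "a \<in> carrier (A i)" unfolding a_def using monoid.nat_pow_closed[OF mA si] .
  obtain p :: nat where p: "p \<ge> 1" "a [^]\<^bsub>A i\<^esub> p \<in> F" using group.pigeon[OF gA F(1) ac] by blast
  have ap: "a [^]\<^bsub>A i\<^esub> p = uc s i [^]\<^bsub>A i\<^esub> (m1 * p)" unfolding a_def using monoid.nat_pow_pow[OF mA si] .
  define qp where "qp = q1 [^]\<^bsub>HK\<^esub> p"
  have qpc: "qp \<in> carrier HK" unfolding qp_def using monoid.nat_pow_closed[OF group.is_monoid[OF grHK] q1(2)] .
  have "\<phi> qp = \<phi> q1 [^]\<^bsub>P\<^esub> p" unfolding qp_def using hom_nat_pow[OF hom q1(2) grHK grP] .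
  also have "\<dots> = e i (a [^]\<^bsub>A i\<^esub> p)" using q1(3) e_pow[OF i ac] unfolding a_def by simp
  finally have qpe: "\<phi> qp = e i (a [^]\<^bsub>A i\<^esub> p)" .
  have m1p: "m1 * p \<ge> 1" using q1(1) p(1) by simp
  have B: "centraliser H s = centraliser H (fst qp)"
    using LemB[OF S sS i nvs m1p qpc] qpe ap by simp
  have pt: "(t, \<one>\<^bsub>K\<^esub>) \<in> carrier HK" using tc oneK by simp
  have z: "\<forall>j\<in>I. j \<noteq> i \<longrightarrow> \<phi> qp j = \<one>\<^bsub>A j\<^esub>" using qpe e_app by simp
  have ci: "\<phi> (t, \<one>\<^bsub>K\<^esub>) i \<otimes>\<^bsub>A i\<^esub> \<phi> qp i = \<phi> qp i \<otimes>\<^bsub>A i\<^esub> \<phi> (t, \<one>\<^bsub>K\<^esub>) i"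
    using F(2) p(2) qpe e_app[OF i] unfolding uc_def by simp
  have "\<phi> (t, \<one>\<^bsub>K\<^esub>) \<otimes>\<^bsub>P\<^esub> \<phi> qp = \<phi> qp \<otimes>\<^bsub>P\<^esub> \<phi> (t, \<one>\<^bsub>K\<^esub>)"
    using comm_supp[OF phi_carrier[OF pt] phi_carrier[OF qpc] i z ci] .
  hence c: "t \<otimes>\<^bsub>H\<^esub> fst qp = fst qp \<otimes>\<^bsub>H\<^esub> t" using fst_comm[OF pt qpc] by simp
  hence "t \<in> centraliser H (fst qp)" using tc by (simp add: centraliser_def)
  hence "t \<in> centraliser H s" using B by simp
  hence "t \<otimes>\<^bsub>H\<^esub> s = s \<otimes>\<^bsub>H\<^esub> t" by (simp add: centraliser_def)
  thus False using indep[OF S sS tS st] by simp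
qed

end



context setting begin

lemma uc_ghom: assumes j: "j \<in> I" shows "group_hom H (A j) (\<lambda>h. uc h j)"
proof -
  have "(\<lambda>h. uc h j) \<in> hom H (A j)"
  proof (rule homI)
    fix x assume "x \<in> carrier H" thus "uc x j \<in> carrier (A j)" using uc_carrier[OF _ j] by blast
  next
    fix x y assume xy: "x \<in> carrier H" "y \<in> carrier H"
    have p: "(x, \<one>\<^bsub>K\<^esub>) \<in> carrier HK" "(y, \<one>\<^bsub>K\<^esub>) \<in> carrier HK" using xy oneK by simp_all
    have "(x \<otimes>\<^bsub>H\<^esub> y, \<one>\<^bsub>K\<^esub>) = (x, \<one>\<^bsub>K\<^esub>) \<otimes>\<^bsub>HK\<^esub> (y, \<one>\<^bsub>K\<^esub>)"
      using grK oneK by (simp add: group.is_monoid monoid.l_one)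
    thus "uc (x \<otimes>\<^bsub>H\<^esub> y) j = uc x j \<otimes>\<^bsub>A j\<^esub> uc y j"
      unfolding uc_def using coord_mult[OF p j] by simp
  qed
  thus ?thesis unfolding group_hom_def group_hom_axioms_def using grH grA[OF j] by blast
qed

lemma Sub_subgroup:
  "subgroup {h \<in> carrier H. \<forall>j\<in>I. j \<noteq> i \<longrightarrow> uc h j \<in> virtual_centre (A j)} H"
proof
  show "{h \<in> carrier H. \<forall>j\<in>I. j \<noteq> i \<longrightarrow> uc h j \<in> virtual_centre (A j)} \<subseteq> carrier H" by blast
  have "\<forall>j\<in>I. j \<noteq> i \<longrightarrow> uc \<one>\<^bsub>H\<^esub> j \<in> virtual_centre (A j)"
  proof (intro ballI impI)
    fix j assume j: "j \<in> I"
    have "uc \<one>\<^bsub>H\<^esub> j = \<one>\<^bsub>A j\<^esub>" using group_hom.hom_one[OF uc_ghom[OF j]] .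
    thus "uc \<one>\<^bsub>H\<^esub> j \<in> virtual_centre (A j)"
      using subgroup.one_closed[OF group.vz_subgroup[OF grA[OF j]]] by simp
  qed
  thus "\<one>\<^bsub>H\<^esub> \<in> {h \<in> carrier H. \<forall>j\<in>I. j \<noteq> i \<longrightarrow> uc h j \<in> virtual_centre (A j)}" using oneH by blast
  fix x y assume x: "x \<in> {h \<in> carrier H. \<forall>j\<in>I. j \<noteq> i \<longrightarrow> uc h j \<in> virtual_centre (A j)}"
    and y: "y \<in> {h \<in> carrier H. \<forall>j\<in>I. j \<noteq> i \<longrightarrow> uc h j \<in> virtual_centre (A j)}"
  have xc: "x \<in> carrier H" and yc: "y \<in> carrier H" using x y by blast+
  have "\<forall>j\<in>I. j \<noteq> i \<longrightarrow> uc (x \<otimes>\<^bsub>H\<^esub> y) j \<in> virtual_centre (A j)"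
  proof (intro ballI impI)
    fix j assume j: "j \<in> I" and ji: "j \<noteq> i"
    have "uc (x \<otimes>\<^bsub>H\<^esub> y) j = uc x j \<otimes>\<^bsub>A j\<^esub> uc y j" using group_hom.hom_mult[OF uc_ghom[OF j] xc yc] .
    moreover have "uc x j \<in> virtual_centre (A j)" "uc y j \<in> virtual_centre (A j)" using x y j ji by blast+
    ultimately show "uc (x \<otimes>\<^bsub>H\<^esub> y) j \<in> virtual_centre (A j)"
      using subgroup.m_closed[OF group.vz_subgroup[OF grA[OF j]]] by simp
  qed
  moreover have "x \<otimes>\<^bsub>H\<^esub> y \<in> carrier H" using xc yc grH by (simp add: group.is_monoid monoid.m_closed)
  ultimately show "x \<otimes>\<^bsub>H\<^esub> y \<in> {h \<in> carrier H. \<forall>j\<in>I. j \<noteq> i \<longrightarrow> uc h j \<in> virtual_centre (A j)}" by blast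
  have "\<forall>j\<in>I. j \<noteq> i \<longrightarrow> uc (inv\<^bsub>H\<^esub> x) j \<in> virtual_centre (A j)"
  proof (intro ballI impI)
    fix j assume j: "j \<in> I" and ji: "j \<noteq> i"
    have "uc (inv\<^bsub>H\<^esub> x) j = inv\<^bsub>A j\<^esub> (uc x j)" using group_hom.hom_inv[OF uc_ghom[OF j] xc] .
    moreover have "uc x j \<in> virtual_centre (A j)" using x j ji by blast
    ultimately show "uc (inv\<^bsub>H\<^esub> x) j \<in> virtual_centre (A j)"
      using subgroup.m_inv_closed[OF group.vz_subgroup[OF grA[OF j]]] by simp
  qed
  moreover have "inv\<^bsub>H\<^esub> x \<in> carrier H" using xc grH by (simp add: group.inv_closed)
  ultimately show "inv\<^bsub>H\<^esub> x \<in> {h \<in> carrier H. \<forall>j\<in>I. j \<noteq> i \<longrightarrow> uc h j \<in> virtual_centre (A j)}" by blast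
qed

lemma two_elements:
  assumes nc: "\<not> cyclic_group H" and S: "IMC_generating_set H S"
  shows "\<exists>s\<in>S. \<exists>t\<in>S. s \<noteq> t"
proof (rule ccontr)
  assume "\<not> (\<exists>s\<in>S. \<exists>t\<in>S. s \<noteq> t)"
  hence all: "\<forall>s\<in>S. \<forall>t\<in>S. s = t" by blast
  have Sc: "S \<subseteq> carrier H" using S_carrier[OF S] .
  have gen: "generate H S = carrier H" using S unfolding IMC_generating_set_def by (elim conjE)
  obtain x where x: "x \<in> carrier H" "S \<subseteq> {x}"
  proof (cases "S = {}")
    case True thus ?thesis using that oneH by blast
  next
    case False
    then obtain s where "s \<in> S" by blast
    thus ?thesis using that all Sc by blast
  qed
  have "generate H S \<subseteq> generate H {x}" using group.mono_generate[OF grH x(2)] .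
  moreover have "generate H {x} \<subseteq> carrier H" using group.generate_in_carrier[OF grH] x(1) by blast
  ultimately have gx: "generate H {x} = carrier H" using gen by blast
  have "subgroup_generated H {x} = H"
    unfolding subgroup_generated_def using x(1) gx by simp
  hence "cyclic_group H" unfolding cyclic_group_def using x(1) by blast
  thus False using nc by blast
qed

lemma main:
  assumes nc: "\<not> cyclic_group H" and S: "IMC_generating_set H S"
  shows "\<exists>i\<in>I. \<forall>h\<in>carrier H. \<forall>j\<in>I. j \<noteq> i \<longrightarrow> uc h j \<in> virtual_centre (A j)"
proof -
  obtain s0 t0 where st0: "s0 \<in> S" "t0 \<in> S" "s0 \<noteq> t0" using two_elements[OF nc S] by blast
  have Sc: "S \<subseteq> carrier H" using S_carrier[OF S] .
  have gen: "generate H S = carrier H" using S unfolding IMC_generating_set_def by (elim conjE)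
  have key: "\<exists>i\<in>I. \<forall>u\<in>S. \<forall>j\<in>I. j \<noteq> i \<longrightarrow> uc u j \<in> virtual_centre (A j)"
  proof (cases "\<exists>u\<in>S. \<exists>i\<in>I. uc u i \<notin> virtual_centre (A i)")
    case True
    then obtain u i where ui: "u \<in> S" "i \<in> I" "uc u i \<notin> virtual_centre (A i)" by blast
    have "\<forall>w\<in>S. \<forall>j\<in>I. j \<noteq> i \<longrightarrow> uc w j \<in> virtual_centre (A j)"
    proof (intro ballI impI)
      fix w j assume w: "w \<in> S" and j: "j \<in> I" and ji: "j \<noteq> i"
      show "uc w j \<in> virtual_centre (A j)"
      proof (rule ccontr)
        assume nw: "uc w j \<notin> virtual_centre (A j)"
        show False
        proof (cases "w = u")
          case False
          show False using cross[OF S ui(1) w False[symmetric] ui(2) j ji ui(3) nw] .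
        next
          case True
          obtain w' where w': "w' \<in> S" "w' \<noteq> u" using st0 by metis
          have "uc w' i \<notin> virtual_centre (A i)"
            using vzclaim[OF S ui(1) w'(1) w'(2)[symmetric] ui(2) ui(3)] by blast
          thus False using cross[OF S w'(1) ui(1) w'(2) ui(2) j ji _ ] nw True by blast
        qed
      qed
    qed
    thus ?thesis using ui(2) by blast
  next
    case False
    have "n \<noteq> 0"
    proof
      assume n0: "n = 0"
      have s0c: "s0 \<in> carrier H" and t0c: "t0 \<in> carrier H" using Sc st0 by blast+
      have p: "(s0, \<one>\<^bsub>K\<^esub>) \<in> carrier HK" "(t0, \<one>\<^bsub>K\<^esub>) \<in> carrier HK" using s0c t0c oneK by simp_all
      have "\<phi> (s0, \<one>\<^bsub>K\<^esub>) \<in> carrier P" "\<phi> (t0, \<one>\<^bsub>K\<^esub>) \<in> carrier P" using phi_carrier p by blast+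
      hence "\<phi> (s0, \<one>\<^bsub>K\<^esub>) = \<phi> (t0, \<one>\<^bsub>K\<^esub>)" using n0 by simp
      hence "(s0, \<one>\<^bsub>K\<^esub>) = (t0, \<one>\<^bsub>K\<^esub>)" using inj_onD[OF inj _ p] by blast
      thus False using st0(3) by simp
    qed
    hence "1 \<in> I" by simp
    thus ?thesis using False by blast
  qed
  then obtain i where i: "i \<in> I" "\<forall>u\<in>S. \<forall>j\<in>I. j \<noteq> i \<longrightarrow> uc u j \<in> virtual_centre (A j)" by blast
  have "S \<subseteq> {h \<in> carrier H. \<forall>j\<in>I. j \<noteq> i \<longrightarrow> uc h j \<in> virtual_centre (A j)}" using Sc i(2) by blast
  hence "generate H S \<subseteq> {h \<in> carrier H. \<forall>j\<in>I. j \<noteq> i \<longrightarrow> uc h j \<in> virtual_centre (A j)}"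
    using group.generate_subgroup_incl[OF grH _ Sub_subgroup] by blast
  thus ?thesis using gen i(1) by blast
qed

end

theorem lemma3p5:
  fixes H :: "('h, 'c) monoid_scheme" and K :: "('k, 'd) monoid_scheme"
    and A :: "nat \<Rightarrow> ('a, 'e) monoid_scheme" and n :: nat
    and \<phi> :: "'h \<times> 'k \<Rightarrow> (nat \<Rightarrow> 'a)"
  assumes "group H" and "group K" and "\<And>i. i \<in> {1..n} \<Longrightarrow> group (A i)"
    and "\<phi> \<in> hom (H \<times>\<times> K) (product_group {1..n} A)"
    and "inj_on \<phi> (carrier (H \<times>\<times> K))"
    and "finite_index (\<phi> ` carrier (H \<times>\<times> K)) (product_group {1..n} A)"
    and "\<And>i. i \<in> {1..n} \<Longrightarrow> almost_stable_centralisers (A i)"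
    and "\<not> cyclic_group H"
    and "\<exists>S. IMC_generating_set H S"
  shows "\<exists>i \<in> {1..n}. \<forall>h \<in> carrier H.
           \<forall>j \<in> {1..n}. j \<noteq> i \<longrightarrow> \<phi> (h, \<one>\<^bsub>K\<^esub>) j \<in> virtual_centre (A j)"
proof -
  have st: "setting H K A n \<phi>" unfolding setting_def using assms(1-7) by blast
  interpret setting H K A n \<phi> by (rule st)
  obtain S where S: "IMC_generating_set H S" using assms(9) by blast
  show ?thesis using main[OF assms(8) S] unfolding uc_def .
qed



end
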